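(* Let $k$ be a field, $X$ a finite non-empty set, and for every $a\in X$ let $\sigma_a,\tau_a:X\to X$ be maps with each $\sigma_a$ bijective; let ${\cal A}$ be the special set-theoretic Yang–Baxter algebra of these data. Suppose $(X,+,\circ)$ is a skew brace and, for all $a,b\in X$, \[\sigma_a(b)=-a+a\circ b,\qquad \sigma_{\sigma_a(b)}(\tau_b(a))=a.\] Then $w_0$ is a central element of ${\cal A}$, where $0$ is the common neutral element of $(X,+)$ and $(X,\circ)$.
   Context: The special set-theoretic Yang–Baxter algebra ${\cal A}$ is the unital associative $k$-algebra generated by $1_{\cal A},h_a,w_a,w_a^{-1}$ ($a\in X$) subject to, for all $a,b\in X$: $h_ah_b=\delta_{a,b}h_a$, $w_a^{-1}w_a=w_aw_a^{-1}=1_{\cal A}$, $w_aw_b=w_{\sigma_a(b)}w_{\tau_b(a)}$, $w_ah_b=h_{\sigma_a(b)}w_a$, and $\sum_{a\in X}h_a=1_{\cal A}$. A skew (left) brace is a set $X$ with two group operations $+$ and $\circ$ such that $a\circ(b+c)=a\circ b-a+a\circ c$ for all $a,b,c\in X$; the neutral elements of the two groups coincide and are denoted $0$. *)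

theory Defs
  imports Main "HOL-Algebra.Group"
begin

definition grp_on :: "('x \<Rightarrow> 'x \<Rightarrow> 'x) \<Rightarrow> 'x \<Rightarrow> 'x monoid" where
  "grp_on op e = \<lparr>carrier = UNIV, mult = op, one = e\<rparr>"

definition skew_brace :: "('x \<Rightarrow> 'x \<Rightarrow> 'x) \<Rightarrow> ('x \<Rightarrow> 'x \<Rightarrow> 'x) \<Rightarrow> 'x \<Rightarrow> bool" where
  "skew_brace pl ci e \<longleftrightarrow> group (grp_on pl e) \<and> group (grp_on ci e) \<and>
     (\<forall>a b c. ci a (pl b c) = pl (pl (ci a b) (inv\<^bsub>grp_on pl e\<^esub> a)) (ci a c))"

definition sb_neg :: "('x \<Rightarrow> 'x \<Rightarrow> 'x) \<Rightarrow> 'x \<Rightarrow> 'x \<Rightarrow> 'x" where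
  "sb_neg pl e a = inv\<^bsub>grp_on pl e\<^esub> a"

datatype 'x gen = H 'x | W 'x | Winv 'x

text \<open>Elements of the free algebra: finitely supported functions from words to k.\<close>
type_synonym ('x, 'k) fa = "'x gen list \<Rightarrow> 'k"

definition fa_elem :: "('x, 'k::zero) fa \<Rightarrow> bool" where
  "fa_elem f \<longleftrightarrow> finite {w. f w \<noteq> 0}"

definition fa_zero :: "('x, 'k::zero) fa" where "fa_zero = (\<lambda>w. 0)"
definition fa_add :: "('x, 'k::plus) fa \<Rightarrow> ('x, 'k) fa \<Rightarrow> ('x, 'k) fa" where
  "fa_add f g = (\<lambda>w. f w + g w)"
definition fa_diff :: "('x, 'k::minus) fa \<Rightarrow> ('x, 'k) fa \<Rightarrow> ('x, 'k) fa" where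
  "fa_diff f g = (\<lambda>w. f w - g w)"
definition fa_mult :: "('x, 'k::comm_semiring_1) fa \<Rightarrow> ('x, 'k) fa \<Rightarrow> ('x, 'k) fa" where
  "fa_mult f g = (\<lambda>w. \<Sum>i\<le>length w. f (take i w) * g (drop i w))"
definition fa_word :: "'x gen list \<Rightarrow> ('x, 'k::{zero,one}) fa" where
  "fa_word u = (\<lambda>w. if w = u then 1 else 0)"
definition fa_one :: "('x, 'k::{zero,one}) fa" where "fa_one = fa_word []"
definition fa_gen :: "'x gen \<Rightarrow> ('x, 'k::{zero,one}) fa" where "fa_gen g = fa_word [g]"

text \<open>Each relation "lhs = rhs" is encoded as the element lhs - rhs of the free algebra.\<close>
definition ybe_relations ::
  "('x::finite \<Rightarrow> 'x \<Rightarrow> 'x) \<Rightarrow> ('x \<Rightarrow> 'x \<Rightarrow> 'x) \<Rightarrow> ('x, 'k::field) fa set" where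
  "ybe_relations \<sigma> \<tau> =
     {fa_diff (fa_mult (fa_gen (H a)) (fa_gen (H b))) (if a = b then fa_gen (H a) else fa_zero) | a b. True}
   \<union> {fa_diff (fa_mult (fa_gen (Winv a)) (fa_gen (W a))) fa_one | a. True}
   \<union> {fa_diff (fa_mult (fa_gen (W a)) (fa_gen (Winv a))) fa_one | a. True}
   \<union> {fa_diff (fa_mult (fa_gen (W a)) (fa_gen (W b)))
              (fa_mult (fa_gen (W (\<sigma> a b))) (fa_gen (W (\<tau> b a)))) | a b. True}
   \<union> {fa_diff (fa_mult (fa_gen (W a)) (fa_gen (H b)))
              (fa_mult (fa_gen (H (\<sigma> a b))) (fa_gen (W a))) | a b. True}
   \<union> {fa_diff (\<lambda>w. \<Sum>a\<in>UNIV. fa_gen (H a) w) fa_one}"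

inductive_set ybe_ideal ::
  "('x::finite \<Rightarrow> 'x \<Rightarrow> 'x) \<Rightarrow> ('x \<Rightarrow> 'x \<Rightarrow> 'x) \<Rightarrow> ('x, 'k::field) fa set"
  for \<sigma> \<tau> where
  rel: "r \<in> ybe_relations \<sigma> \<tau> \<Longrightarrow> r \<in> ybe_ideal \<sigma> \<tau>"
| zero: "fa_zero \<in> ybe_ideal \<sigma> \<tau>"
| add: "f \<in> ybe_ideal \<sigma> \<tau> \<Longrightarrow> g \<in> ybe_ideal \<sigma> \<tau> \<Longrightarrow> fa_add f g \<in> ybe_ideal \<sigma> \<tau>"
| mult: "f \<in> ybe_ideal \<sigma> \<tau> \<Longrightarrow> fa_elem p \<Longrightarrow> fa_elem q \<Longrightarrow>
         fa_mult (fa_mult p f) q \<in> ybe_ideal \<sigma> \<tau>"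

text \<open>An element x of the free algebra represents a central element of the quotient
  algebra A = free algebra / ideal iff x y - y x lies in the ideal for all y.\<close>
definition ybe_central :: "('x::finite \<Rightarrow> 'x \<Rightarrow> 'x) \<Rightarrow> ('x \<Rightarrow> 'x \<Rightarrow> 'x) \<Rightarrow> ('x, 'k::field) fa \<Rightarrow> bool" where
  "ybe_central \<sigma> \<tau> x \<longleftrightarrow>
     (\<forall>y. fa_elem y \<longrightarrow> fa_diff (fa_mult x y) (fa_mult y x) \<in> ybe_ideal \<sigma> \<tau>)"

end

theory Submission
  imports Defs
begin

lemma fa_word_mult:
  fixes a b :: "'x gen list"
  shows "(fa_mult (fa_word a) (fa_word b) :: ('x,'a::comm_semiring_1) fa) = fa_word (a @ b)"
proof (rule ext)
  fix w :: "'x gen list"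
  have eq: "(if take i w = a then (1::'a) else 0) * (if drop i w = b then 1 else 0)
      = (if i = length a then (if w = a @ b then 1 else 0) else 0)" if "i \<le> length w" for i
  proof -
    have iff: "(take i w = a \<and> drop i w = b) \<longleftrightarrow> (i = length a \<and> w = a @ b)"
    proof
      assume h: "take i w = a \<and> drop i w = b"
      then have "length a = i" using that by auto
      moreover have "w = a @ b" using h by (metis append_take_drop_id)
      ultimately show "i = length a \<and> w = a @ b" by simp
    qed auto
    have m: "(if take i w = a then (1::'a) else 0) * (if drop i w = b then 1 else 0)
      = (if take i w = a \<and> drop i w = b then 1 else 0)" by simp
    show ?thesis unfolding m iff by simp
  qed
  have "(fa_mult (fa_word a) (fa_word b) :: ('x,'a) fa) w
      = (\<Sum>i\<le>length w. (if i = length a then (if w = a @ b then (1::'a) else 0) else 0))"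
    unfolding fa_mult_def fa_word_def using eq by (intro sum.cong) auto
  also have "\<dots> = fa_word (a @ b) w"
    by (auto simp: sum.delta fa_word_def)
  finally show "(fa_mult (fa_word a) (fa_word b) :: ('x,'a) fa) w = fa_word (a @ b) w" .
qed

lemma fa_gen_mult: "fa_mult (fa_gen a) (fa_gen b) = (fa_word [a, b] :: ('x,'k::comm_semiring_1) fa)"
  unfolding fa_gen_def by (simp add: fa_word_mult)

lemma fa_one_left_scaled:
  fixes f :: "('x,'k::comm_semiring_1) fa"
  shows "fa_mult (\<lambda>w. c * fa_one w) f = (\<lambda>w. (c::'k::comm_semiring_1) * f w)"
proof (rule ext)
  fix w :: "'x gen list"
  have "fa_mult (\<lambda>w. c * fa_one w) f w = (\<Sum>i\<le>length w. if i = 0 then c * f w else 0)"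
    unfolding fa_mult_def fa_one_def fa_word_def by (intro sum.cong) auto
  also have "\<dots> = c * f w" by (simp add: sum.delta)
  finally show "fa_mult (\<lambda>w. c * fa_one w) f w = c * f w" .
qed

lemma fa_one_left: "fa_mult fa_one f = (f :: ('x,'k::comm_semiring_1) fa)"
  using fa_one_left_scaled[of 1 f] by simp

lemma fa_one_right: "fa_mult f fa_one = (f :: ('x,'k::comm_semiring_1) fa)"
proof (rule ext)
  fix w :: "'x gen list"
  have "fa_mult f fa_one w = (\<Sum>i\<le>length w. if i = length w then f w else 0)"
    unfolding fa_mult_def fa_one_def fa_word_def by (intro sum.cong) auto
  also have "\<dots> = f w" by (simp add: sum.delta)
  finally show "fa_mult f fa_one w = f w" .
qed

lemma fa_mult_diff_left: "fa_mult (fa_diff f g) h = fa_diff (fa_mult f h) (fa_mult g h :: ('x,'k::comm_ring_1) fa)"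
  unfolding fa_mult_def fa_diff_def by (auto simp: algebra_simps sum_subtractf)

lemma fa_mult_diff_right: "fa_mult h (fa_diff f g) = fa_diff (fa_mult h f) (fa_mult h g :: ('x,'k::comm_ring_1) fa)"
  unfolding fa_mult_def fa_diff_def by (auto simp: algebra_simps sum_subtractf)

lemma fa_mult_add_left: "fa_mult (fa_add f g) h = fa_add (fa_mult f h) (fa_mult g h :: ('x,'k::comm_ring_1) fa)"
  unfolding fa_mult_def fa_add_def by (auto simp: algebra_simps sum.distrib)

lemma fa_mult_add_right: "fa_mult h (fa_add f g) = fa_add (fa_mult h f) (fa_mult h g :: ('x,'k::comm_ring_1) fa)"
  unfolding fa_mult_def fa_add_def by (auto simp: algebra_simps sum.distrib)

lemma fa_mult_scale_left: "fa_mult (\<lambda>w. c * f w) g = (\<lambda>w. (c::'k::comm_semiring_1) * fa_mult f g w)"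
  unfolding fa_mult_def by (auto simp: sum_distrib_left mult_ac)

lemma fa_mult_scale_right: "fa_mult g (\<lambda>w. c * f w) = (\<lambda>w. (c::'k::comm_semiring_1) * fa_mult g f w)"
  unfolding fa_mult_def by (auto simp: sum_distrib_left mult_ac)

lemma fa_mult_zero_right: "fa_mult g fa_zero = (fa_zero :: ('x,'k::comm_semiring_1) fa)"
  unfolding fa_mult_def fa_zero_def by auto

lemma fa_mult_zero_left: "fa_mult fa_zero g = (fa_zero :: ('x,'k::comm_semiring_1) fa)"
  unfolding fa_mult_def fa_zero_def by auto

lemma fa_elem_one_scaled: "fa_elem (\<lambda>w. c * fa_one w :: 'k::comm_semiring_1)"
proof -
  have "{w. c * fa_one w \<noteq> (0::'k)} \<subseteq> {[]}" by (auto simp: fa_one_def fa_word_def)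
  then show ?thesis unfolding fa_elem_def using finite_subset by blast
qed

lemma fa_elem_word: "fa_elem (fa_word u :: ('x,'k::comm_semiring_1) fa)"
proof -
  have "{w. (fa_word u w :: 'k) \<noteq> 0} \<subseteq> {u}" by (auto simp: fa_word_def)
  then show ?thesis unfolding fa_elem_def using finite_subset by blast
qed

lemma fa_elem_one: "fa_elem (fa_one :: ('x,'k::comm_semiring_1) fa)"
  unfolding fa_one_def by (rule fa_elem_word)

lemma ideal_scale:
  assumes "f \<in> ybe_ideal \<sigma> \<tau>"
  shows "(\<lambda>w. c * f w) \<in> ybe_ideal \<sigma> \<tau>"
proof -
  have "fa_mult (fa_mult (\<lambda>w. c * fa_one w) f) fa_one \<in> ybe_ideal \<sigma> \<tau>"
    by (rule ybe_ideal.mult[OF assms fa_elem_one_scaled fa_elem_one])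
  then show ?thesis by (simp add: fa_one_left_scaled fa_one_right)
qed

lemma ideal_diff:
  assumes "f \<in> ybe_ideal \<sigma> \<tau>" "g \<in> ybe_ideal \<sigma> \<tau>"
  shows "fa_diff f g \<in> ybe_ideal \<sigma> \<tau>"
proof -
  have "fa_add f (\<lambda>w. (-1) * g w) \<in> ybe_ideal \<sigma> \<tau>"
    by (intro ybe_ideal.add assms ideal_scale)
  moreover have "fa_add f (\<lambda>w. (-1) * g w) = fa_diff f g"
    unfolding fa_add_def fa_diff_def by auto
  ultimately show ?thesis by simp
qed

lemma ideal_lmult:
  assumes "f \<in> ybe_ideal \<sigma> \<tau>" "fa_elem p"
  shows "fa_mult p f \<in> ybe_ideal \<sigma> \<tau>"
  using ybe_ideal.mult[OF assms fa_elem_one] by (simp add: fa_one_right)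

lemma ideal_rmult:
  assumes "f \<in> ybe_ideal \<sigma> \<tau>" "fa_elem q"
  shows "fa_mult f q \<in> ybe_ideal \<sigma> \<tau>"
  using ybe_ideal.mult[OF assms(1) fa_elem_one assms(2)] by (simp add: fa_one_left)

lemma rel_in: "r \<in> ybe_relations \<sigma> \<tau> \<Longrightarrow> r \<in> ybe_ideal \<sigma> \<tau>"
  by (rule ybe_ideal.rel)

theorem lemma2p15:
  fixes \<sigma> \<tau> :: "'x::finite \<Rightarrow> 'x \<Rightarrow> 'x"
    and pl ci :: "'x \<Rightarrow> 'x \<Rightarrow> 'x" and e :: 'x
  assumes "\<forall>a. bij (\<sigma> a)"
    and "skew_brace pl ci e"
    and "\<forall>a b. \<sigma> a b = pl (sb_neg pl e a) (ci a b)"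
    and "\<forall>a b. \<sigma> (\<sigma> a b) (\<tau> b a) = a"
  shows "ybe_central \<sigma> \<tau> (fa_gen (W e) :: ('x, 'k::field) fa)"
proof -
  have GP: "group (grp_on pl e)" and GC: "group (grp_on ci e)"
    using assms(2) unfolding skew_brace_def by auto
  have neg_e: "sb_neg pl e e = e"
    using monoid.inv_one[OF group.is_monoid[OF GP]] unfolding sb_neg_def by (simp add: grp_on_def)
  have pl_l: "pl e b = b" for b
    using monoid.l_one[OF group.is_monoid[OF GP], of b] by (simp add: grp_on_def)
  have ci_l: "ci e b = b" for b
    using monoid.l_one[OF group.is_monoid[OF GC], of b] by (simp add: grp_on_def)
  have ci_r: "ci b e = b" for b
    using monoid.r_one[OF group.is_monoid[OF GC], of b] by (simp add: grp_on_def)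
  have pl_inv: "pl (sb_neg pl e b) b = e" for b
    using group.l_inv[OF GP, of b] unfolding sb_neg_def by (simp add: grp_on_def)
  have s0: "\<sigma> e b = b" for b using assms(3) neg_e pl_l ci_l by simp
  have sb0: "\<sigma> b e = e" for b using assms(3) ci_r pl_inv by simp
  have t0: "\<tau> b e = e" for b
  proof -
    have "\<sigma> b (\<tau> b e) = \<sigma> b e" using assms(4)[rule_format, of e b] s0 sb0 by simp
    then show ?thesis using assms(1) by (meson bij_def inj_eq)
  qed
  define I where "I = (ybe_ideal \<sigma> \<tau> :: ('x,'k) fa set)"
  define D :: "'x gen list \<Rightarrow> ('x,'k) fa" where
    "D u = fa_diff (fa_word (W e # u)) (fa_word (u @ [W e]))" for u
  have DH: "D [H b] \<in> I" for b
  proof -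
    have "fa_diff (fa_mult (fa_gen (W e)) (fa_gen (H b)))
              (fa_mult (fa_gen (H (\<sigma> e b))) (fa_gen (W e))) \<in> ybe_relations \<sigma> \<tau>"
      unfolding ybe_relations_def by blast
    then show ?thesis unfolding I_def D_def using rel_in by (fastforce simp: s0 fa_gen_mult)
  qed
  have DW: "D [W b] \<in> I" for b
  proof -
    have "fa_diff (fa_mult (fa_gen (W e)) (fa_gen (W b)))
              (fa_mult (fa_gen (W (\<sigma> e b))) (fa_gen (W (\<tau> b e)))) \<in> ybe_relations \<sigma> \<tau>"
      unfolding ybe_relations_def by blast
    then show ?thesis unfolding I_def D_def using rel_in by (fastforce simp: s0 t0 fa_gen_mult)
  qed
  have DWi: "D [Winv b] \<in> I" for b
  proof -
    have R: "fa_diff (fa_word [W e, W b]) (fa_word [W b, W e]) \<in> I"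
      using DW[of b] unfolding D_def by simp
    have "fa_diff (fa_mult (fa_gen (W b)) (fa_gen (Winv b))) fa_one \<in> ybe_relations \<sigma> \<tau>"
      unfolding ybe_relations_def by blast
    then have R2: "fa_diff (fa_word [W b, Winv b]) fa_one \<in> I"
      unfolding I_def using rel_in by (fastforce simp: fa_gen_mult)
    have "fa_diff (fa_mult (fa_gen (Winv b)) (fa_gen (W b))) fa_one \<in> ybe_relations \<sigma> \<tau>"
      unfolding ybe_relations_def by blast
    then have R3: "fa_diff (fa_word [Winv b, W b]) fa_one \<in> I"
      unfolding I_def using rel_in by (fastforce simp: fa_gen_mult)
    have X1: "fa_mult (fa_mult (fa_word [Winv b]) (fa_diff (fa_word [W e, W b]) (fa_word [W b, W e]))) (fa_word [Winv b]) \<in> I"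
      using R unfolding I_def by (intro ybe_ideal.mult fa_elem_word)
    have X2: "fa_mult (fa_word [Winv b, W e]) (fa_diff (fa_word [W b, Winv b]) fa_one) \<in> I"
      using R2 unfolding I_def by (intro ideal_lmult fa_elem_word)
    have X3: "fa_mult (fa_diff (fa_word [Winv b, W b]) fa_one) (fa_word [W e, Winv b]) \<in> I"
      using R3 unfolding I_def by (intro ideal_rmult fa_elem_word)
    have "fa_diff (fa_diff (fa_mult (fa_word [Winv b, W e]) (fa_diff (fa_word [W b, Winv b]) fa_one))
          (fa_mult (fa_mult (fa_word [Winv b]) (fa_diff (fa_word [W e, W b]) (fa_word [W b, W e]))) (fa_word [Winv b])))
          (fa_mult (fa_diff (fa_word [Winv b, W b]) fa_one) (fa_word [W e, Winv b])) \<in> I"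
      using X1 X2 X3 unfolding I_def by (intro ideal_diff)
    moreover have "fa_diff (fa_diff (fa_mult (fa_word [Winv b, W e]) (fa_diff (fa_word [W b, Winv b]) fa_one))
          (fa_mult (fa_mult (fa_word [Winv b]) (fa_diff (fa_word [W e, W b]) (fa_word [W b, W e]))) (fa_word [Winv b])))
          (fa_mult (fa_diff (fa_word [Winv b, W b]) fa_one) (fa_word [W e, Winv b])) = D [Winv b]"
      unfolding D_def
      by (simp add: fa_mult_diff_left fa_mult_diff_right fa_word_mult fa_one_left fa_one_right)
         (simp add: fun_eq_iff fa_diff_def algebra_simps)
    ultimately show ?thesis by simp
  qed
  have Dg: "D [g] \<in> I" for g using DH DW DWi by (cases g) auto
  have Du: "D u \<in> I" for u
  proof (induction u)
    case Nil
    have "D [] = fa_zero" unfolding D_def fa_diff_def fa_zero_def by auto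
    then show ?case unfolding I_def by (simp add: ybe_ideal.zero)
  next
    case (Cons g u)
    have a: "fa_mult (D [g]) (fa_word u) \<in> I"
      using Dg unfolding I_def by (intro ideal_rmult fa_elem_word)
    have b: "fa_mult (fa_word [g]) (D u) \<in> I"
      using Cons unfolding I_def by (intro ideal_lmult fa_elem_word)
    have "fa_add (fa_mult (D [g]) (fa_word u)) (fa_mult (fa_word [g]) (D u)) \<in> I"
      using a b unfolding I_def by (rule ybe_ideal.add)
    moreover have "fa_add (fa_mult (D [g]) (fa_word u)) (fa_mult (fa_word [g]) (D u)) = D (g # u)"
      unfolding D_def
      by (simp add: fa_mult_diff_left fa_mult_diff_right fa_word_mult)
         (simp add: fun_eq_iff fa_diff_def fa_add_def)
    ultimately show ?case by simp
  qed
  define C where "C y \<longleftrightarrow> fa_diff (fa_mult (fa_gen (W e)) y) (fa_mult y (fa_gen (W e))) \<in> I"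
    for y :: "('x,'k) fa"
  have Cword: "C (\<lambda>w. c * fa_word u w)" for c u
  proof -
    have "(\<lambda>w. c * D u w) \<in> I" using Du unfolding I_def by (rule ideal_scale)
    moreover have "(\<lambda>w. c * D u w) = fa_diff (fa_mult (fa_gen (W e)) (\<lambda>w. c * fa_word u w))
          (fa_mult (\<lambda>w. c * fa_word u w) (fa_gen (W e)))"
      unfolding D_def fa_gen_def
      by (simp add: fa_mult_scale_left fa_mult_scale_right fa_word_mult)
         (simp add: fun_eq_iff fa_diff_def algebra_simps)
    ultimately show ?thesis unfolding C_def by simp
  qed
  have Cadd: "C (fa_add y z)" if "C y" "C z" for y z
  proof -
    have "fa_add (fa_diff (fa_mult (fa_gen (W e)) y) (fa_mult y (fa_gen (W e))))
                 (fa_diff (fa_mult (fa_gen (W e)) z) (fa_mult z (fa_gen (W e)))) \<in> I"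
      using that unfolding C_def I_def by (rule ybe_ideal.add)
    moreover have "fa_add (fa_diff (fa_mult (fa_gen (W e)) y) (fa_mult y (fa_gen (W e))))
                 (fa_diff (fa_mult (fa_gen (W e)) z) (fa_mult z (fa_gen (W e))))
        = fa_diff (fa_mult (fa_gen (W e)) (fa_add y z)) (fa_mult (fa_add y z) (fa_gen (W e)))"
      by (simp add: fa_mult_add_left fa_mult_add_right) (simp add: fun_eq_iff fa_diff_def fa_add_def)
    ultimately show ?thesis unfolding C_def by simp
  qed
  have Cfin: "\<forall>y. {w. y w \<noteq> 0} \<subseteq> S \<longrightarrow> C y" if "finite S" for S
    using that
  proof (induction S rule: finite_induct)
    case empty
    show ?case
    proof (intro allI impI)
      fix y :: "('x,'k) fa" assume "{w. y w \<noteq> 0} \<subseteq> {}"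
      then have "y = fa_zero" unfolding fa_zero_def by auto
      moreover have "C fa_zero"
      proof -
        have "fa_diff fa_zero fa_zero = (fa_zero :: ('x,'k) fa)" by (simp add: fa_diff_def fa_zero_def)
        then show ?thesis unfolding C_def I_def
          by (simp add: fa_mult_zero_left fa_mult_zero_right ybe_ideal.zero)
      qed
      ultimately show "C y" by simp
    qed
  next
    case (insert u S)
    show ?case
    proof (intro allI impI)
      fix y :: "('x,'k) fa" assume sub: "{w. y w \<noteq> 0} \<subseteq> insert u S"
      have "{w. (y(u := 0)) w \<noteq> 0} \<subseteq> S" using sub by auto
      then have c1: "C (y(u := 0))" using insert.IH by simp
      have yeq: "y = fa_add (y(u := 0)) (\<lambda>w. y u * fa_word u w)"
        by (simp add: fun_eq_iff fa_add_def fa_word_def)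
      show "C y" by (subst yeq) (rule Cadd[OF c1 Cword])
    qed
  qed
  show ?thesis
    unfolding ybe_central_def
  proof (intro allI impI)
    fix y :: "('x,'k) fa" assume "fa_elem y"
    then have "C y" using Cfin[of "{w. y w \<noteq> 0}"] unfolding fa_elem_def by simp
    then show "fa_diff (fa_mult (fa_gen (W e)) y) (fa_mult y (fa_gen (W e))) \<in> ybe_ideal \<sigma> \<tau>"
      unfolding C_def I_def .
  qed
qed

end
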